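(* Let $\{\tau_k\}$ be the merit parameter sequence generated by Algorithm 1 or Algorithm 2 (described in the context) under the Standing Assumption and Matrix Assumption of the context, and suppose the algorithm does not terminate finitely. Then there exist $k_\tau\in\mathbb{N}$ and $\tau_{\min}>0$ such that $\tau_k=\tau_{\min}$ for all $k\ge k_\tau$.
   Context: Notation: $g_k=\nabla f(x_k)$, $c_k=c(x_k)$, $J_k=\nabla c(x_k)^T$; $\phi(x,\tau)=\tau f(x)+\|c(x)\|_1$; $\Delta q(x,\tau,g,H,d)=-\tau(g^Td+\frac12\max\{d^THd,0\})+\|c(x)\|_1$. Matrix Assumption: symmetric $H_k$ with $\|H_k\|_2\le\kappa_H$ and $u^TH_ku\ge\zeta\|u\|_2^2$ whenever $J_ku=0$. Common iteration: $(d_k,y_k)$ solves $H_kd_k+J_k^Ty_k=-g_k$, $J_kd_k=-c_k$; stop if $g_k+J_k^Ty_k=0$ and $c_k=0$. $\tau_k^{trial}=\infty$ if $g_k^Td_k+\max\{d_k^TH_kd_k,0\}\le0$, else $\frac{(1-\sigma)\|c_k\|_1}{g_k^Td_k+\max\{d_k^TH_kd_k,0\}}$; $\tau_k=\tau_{k-1}$ if $\tau_{k-1}\le\tau_k^{trial}$, else $(1-\epsilon)\tau_k^{trial}$ (with $\tau_{-1}>0$, $\epsilon,\sigma\in(0,1)$); $x_{k+1}=x_k+\alpha_kd_k$. (SD) for trial $\alpha$: $\phi(x_k+\alpha d_k,\tau_k)\le\phi(x_k,\tau_k)-\eta\alpha\Delta q(x_k,\tau_k,g_k,H_k,d_k)$,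 $\eta\in(0,1)$. Algorithm 1 (inputs also $\rho>1$, $L_{-1}>0$, $\gamma_{-1,i}>0$): choose $L_{k,0}\in(0,L_{k-1}]$, $\gamma_{k,i,0}\in(0,\gamma_{k-1,i}]$; for $j=0,1,\dots$ with $\Lambda_{k,j}=\tau_kL_{k,j}+\sum_i\gamma_{k,i,j}$: $\widehat\alpha_{k,j}=\frac{2(1-\eta)\Delta q(x_k,\tau_k,g_k,H_k,d_k)}{\Lambda_{k,j}\|d_k\|_2^2}$, $\widetilde\alpha_{k,j}=\widehat\alpha_{k,j}-\frac{4\|c_k\|_1}{\Lambda_{k,j}\|d_k\|_2^2}$; $\alpha_{k,j}=\widehat\alpha_{k,j}$ if $\widehat\alpha_{k,j}<1$, $1$ if $\widetilde\alpha_{k,j}\le1\le\widehat\alpha_{k,j}$, $\widetilde\alpha_{k,j}$ if $\widetilde\alpha_{k,j}>1$; accept ($\alpha_k=\alpha_{k,j}$, $L_k=L_{k,j}$, $\gamma_{k,i}=\gamma_{k,i,j}$) if (SD) holds or if both $f(x_k+\alpha_{k,j}d_k)\le f(x_k)+\alpha_{k,j}g_k^Td_k+\frac12L_{k,j}\alpha_{k,j}^2\|d_k\|_2^2$ (LF) and $|c_i(x_k+\alpha_{k,j}d_k)|\le|c_i(x_k)+\alpha_{k,j}\nabla c_i(x_k)^Td_k|+\frac12\gamma_{k,i,j}\alpha_{k,j}^2\|d_k\|_2^2$ (LC$_i$) for all $i$; otherwise multiply $L_{k,j}$ by $\rho$ if (LF) fails and $\gamma_{k,i,j}$ by $\rho$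 if (LC$_i$) fails. Algorithm 2 (inputs also $\nu\in(0,1)$, $\alpha>0$): $\alpha_k=\nu^j\alpha$ for the smallest $j\ge0$ such that (SD) holds. Standing Assumption: an open convex set $\mathcal X$ contains all iterates and trial points $x_k+\alpha_{k,j}d_k$; $f$ is $C^1$, bounded below on $\mathcal X$, $\nabla f$ bounded and $L$-Lipschitz on $\mathcal X$; $c$, $\nabla c^T$ bounded on $\mathcal X$; $\nabla c_i$ is $\gamma_i$-Lipschitz on $\mathcal X$; singular values of $\nabla c(x)^T$ bounded away from zero uniformly over $\mathcal X$. *)

theory Defs
  imports "HOL-Analysis.Analysis"
begin

text \<open>Variables live in real^'n, constraints are indexed by the finite type 'm.
  Jc x is the constraint Jacobian (row i = gradient of c_i transposed).\<close>

definition l1n :: "real^'m \<Rightarrow> real" where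
  "l1n v = (\<Sum>i\<in>UNIV. \<bar>v $ i\<bar>)"

definition merit :: "(real^'n \<Rightarrow> real) \<Rightarrow> (real^'n \<Rightarrow> real^'m) \<Rightarrow> real \<Rightarrow> real^'n \<Rightarrow> real" where
  "merit f c tau x = tau * f x + l1n (c x)"

definition dq :: "real \<Rightarrow> real^'n \<Rightarrow> real^'n^'n \<Rightarrow> real^'n \<Rightarrow> real^'m \<Rightarrow> real" where
  "dq tau g H d cx = - tau * (g \<bullet> d + 1/2 * max (d \<bullet> (H *v d)) 0) + l1n cx"

text \<open>Merit parameter update; the case tau_trial = infinity is the first branch.\<close>
definition tau_update :: "real \<Rightarrow> real \<Rightarrow> real \<Rightarrow> real^'n \<Rightarrow> real^'n^'n \<Rightarrow> real^'n \<Rightarrow> real \<Rightarrow> real" where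
  "tau_update eps sig tprev g H d cn =
     (let q = g \<bullet> d + max (d \<bullet> (H *v d)) 0 in
      if q \<le> 0 then tprev
      else (let tt = (1 - sig) * cn / q in if tprev \<le> tt then tprev else (1 - eps) * tt))"

definition SD :: "(real^'n \<Rightarrow> real) \<Rightarrow> (real^'n \<Rightarrow> real^'m) \<Rightarrow> real \<Rightarrow> real
     \<Rightarrow> real^'n \<Rightarrow> real^'n \<Rightarrow> real^'n \<Rightarrow> real^'n^'n \<Rightarrow> real \<Rightarrow> bool" where
  "SD f c eta tau x g d H a \<longleftrightarrow>
     merit f c tau (x + a *\<^sub>R d) \<le> merit f c tau x - eta * a * dq tau g H d (c x)"

text \<open>Common iteration (without the step size rule). tau0 is tau_{-1}.\<close>
definition common_iter ::
  "(real^'n \<Rightarrow> real) \<Rightarrow> (real^'n \<Rightarrow> real^'n) \<Rightarrow> (real^'n \<Rightarrow> real^'m) \<Rightarrow> (real^'n \<Rightarrow> real^'n^'m)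
   \<Rightarrow> (nat \<Rightarrow> real^'n^'n) \<Rightarrow> real \<Rightarrow> real \<Rightarrow> real
   \<Rightarrow> (nat \<Rightarrow> real^'n) \<Rightarrow> (nat \<Rightarrow> real^'n) \<Rightarrow> (nat \<Rightarrow> real^'m) \<Rightarrow> (nat \<Rightarrow> real) \<Rightarrow> (nat \<Rightarrow> real) \<Rightarrow> bool"
  where
  "common_iter f gradf c Jc H eps sig tau0 x d y tau alpha \<longleftrightarrow>
     (\<forall>k. H k *v d k + transpose (Jc (x k)) *v y k = - gradf (x k)
          \<and> Jc (x k) *v d k = - c (x k)
          \<and> tau k = tau_update eps sig (if k = 0 then tau0 else tau (k - 1))
                      (gradf (x k)) (H k) (d k) (l1n (c (x k)))
          \<and> x (Suc k) = x k + alpha k *\<^sub>R d k)"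

definition alg1_trial ::
  "real \<Rightarrow> real \<Rightarrow> real \<Rightarrow> ('m \<Rightarrow> real) \<Rightarrow> real^'n \<Rightarrow> real^'n^'n \<Rightarrow> real^'n \<Rightarrow> real^'m \<Rightarrow> real" where
  "alg1_trial eta tau Lkj gkj g H d cx =
     (let Lam = tau * Lkj + (\<Sum>i\<in>UNIV. gkj i);
          ah = 2 * (1 - eta) * dq tau g H d cx / (Lam * (norm d)\<^sup>2);
          atl = ah - 4 * l1n cx / (Lam * (norm d)\<^sup>2)
      in if ah < 1 then ah else if atl \<le> 1 then 1 else atl)"

definition LF :: "(real^'n \<Rightarrow> real) \<Rightarrow> real^'n \<Rightarrow> real^'n \<Rightarrow> real^'n \<Rightarrow> real \<Rightarrow> real \<Rightarrow> bool" where
  "LF f x g d Lkj a \<longleftrightarrow> f (x + a *\<^sub>R d) \<le> f x + a * (g \<bullet> d) + 1/2 * Lkj * a\<^sup>2 * (norm d)\<^sup>2"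

definition LC :: "(real^'n \<Rightarrow> real^'m) \<Rightarrow> real^'n \<Rightarrow> real^'n^'m \<Rightarrow> real^'n \<Rightarrow> 'm \<Rightarrow> real \<Rightarrow> real \<Rightarrow> bool" where
  "LC c x J d i gki a \<longleftrightarrow>
     \<bar>c (x + a *\<^sub>R d) $ i\<bar> \<le> \<bar>c x $ i + a * (J *v d) $ i\<bar> + 1/2 * gki * a\<^sup>2 * (norm d)\<^sup>2"

text \<open>LL k j = L_{k,j}, GG k j i = gamma_{k,i,j}, jacc k = accepted
  inner index; L_k = LL k (jacc k), gamma_{k,i} = GG k (jacc k) i. Lm1 = L_{-1}, Gm1 i = gamma_{-1,i}.\<close>
definition alg1_steps ::
  "(real^'n \<Rightarrow> real) \<Rightarrow> (real^'n \<Rightarrow> real^'n) \<Rightarrow> (real^'n \<Rightarrow> real^'m) \<Rightarrow> (real^'n \<Rightarrow> real^'n^'m)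
   \<Rightarrow> (nat \<Rightarrow> real^'n^'n) \<Rightarrow> real \<Rightarrow> real \<Rightarrow> real \<Rightarrow> ('m \<Rightarrow> real) \<Rightarrow> (real^'n) set
   \<Rightarrow> (nat \<Rightarrow> real^'n) \<Rightarrow> (nat \<Rightarrow> real^'n) \<Rightarrow> (nat \<Rightarrow> real) \<Rightarrow> (nat \<Rightarrow> real)
   \<Rightarrow> (nat \<Rightarrow> nat \<Rightarrow> real) \<Rightarrow> (nat \<Rightarrow> nat \<Rightarrow> 'm \<Rightarrow> real) \<Rightarrow> (nat \<Rightarrow> nat) \<Rightarrow> bool" where
  "alg1_steps f gradf c Jc H eta rho Lm1 Gm1 X x d tau alpha LL GG jacc \<longleftrightarrow>
     (\<forall>k. let g = gradf (x k); J = Jc (x k); cx = c (x k);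
              tr = (\<lambda>j. alg1_trial eta (tau k) (LL k j) (GG k j) g (H k) (d k) cx);
              acc = (\<lambda>j. SD f c eta (tau k) (x k) g (d k) (H k) (tr j)
                         \<or> (LF f (x k) g (d k) (LL k j) (tr j)
                            \<and> (\<forall>i. LC c (x k) J (d k) i (GG k j i) (tr j))))
          in 0 < LL k 0 \<and> LL k 0 \<le> (if k = 0 then Lm1 else LL (k - 1) (jacc (k - 1)))
           \<and> (\<forall>i. 0 < GG k 0 i \<and> GG k 0 i \<le> (if k = 0 then Gm1 i else GG (k - 1) (jacc (k - 1)) i))
           \<and> (\<forall>j < jacc k. \<not> acc j
                 \<and> LL k (Suc j) = (if LF f (x k) g (d k) (LL k j) (tr j) then LL k j else rho * LL k j)
                 \<and> (\<forall>i. GG k (Suc j) i = (if LC c (x k) J (d k) i (GG k j i) (tr j)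
                                          then GG k j i else rho * GG k j i)))
           \<and> acc (jacc k)
           \<and> alpha k = tr (jacc k)
           \<and> (\<forall>j \<le> jacc k. x k + tr j *\<^sub>R d k \<in> X))"

definition alg2_steps ::
  "(real^'n \<Rightarrow> real) \<Rightarrow> (real^'n \<Rightarrow> real^'n) \<Rightarrow> (real^'n \<Rightarrow> real^'m)
   \<Rightarrow> (nat \<Rightarrow> real^'n^'n) \<Rightarrow> real \<Rightarrow> real \<Rightarrow> real \<Rightarrow> (real^'n) set
   \<Rightarrow> (nat \<Rightarrow> real^'n) \<Rightarrow> (nat \<Rightarrow> real^'n) \<Rightarrow> (nat \<Rightarrow> real) \<Rightarrow> (nat \<Rightarrow> real) \<Rightarrow> bool" where
  "alg2_steps f gradf c H eta nu abar X x d tau alpha \<longleftrightarrow>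
     (\<forall>k. \<exists>j. alpha k = nu ^ j * abar
          \<and> SD f c eta (tau k) (x k) (gradf (x k)) (d k) (H k) (nu ^ j * abar)
          \<and> (\<forall>i < j. \<not> SD f c eta (tau k) (x k) (gradf (x k)) (d k) (H k) (nu ^ i * abar))
          \<and> (\<forall>i \<le> j. x k + (nu ^ i * abar) *\<^sub>R d k \<in> X))"

end

theory Submission
  imports Defs
begin
lemma tr_dot: fixes J :: "real^'n^'m" shows "(transpose J *v w) \<bullet> u = w \<bullet> (J *v u)"
  by (metis dot_lmul_matrix transpose_transpose vector_transpose_matrix)

lemma decomp: fixes J :: "real^'n^'m"
  obtains w u where "d = transpose J *v w + u" "J *v u = 0"
proof -
  let ?S = "range (\<lambda>w. transpose J *v w)"
  have sub: "subspace ?S"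
    by (metis matrix_vector_mul_linear subspace_UNIV linear_subspace_image)
  obtain v u where v: "v \<in> span ?S" and o: "\<And>z. z \<in> span ?S \<Longrightarrow> orthogonal u z" and de: "d = v + u"
    by (metis orthogonal_subspace_decomp_exists)
  have "v \<in> ?S" using v sub by (metis span_eq_iff)
  then obtain w where w: "v = transpose J *v w" by blast
  have "(J *v u) \<bullet> (J *v u) = 0"
  proof -
    have "transpose J *v (J *v u) \<in> span ?S" by (intro span_base) auto
    then have "u \<bullet> (transpose J *v (J *v u)) = 0" using o by (simp add: orthogonal_def)
    then show ?thesis using tr_dot[of J "J *v u" u] by (simp add: inner_commute)
  qed
  then have "J *v u = 0" by simp
  then show ?thesis using that de w by blast
qed

lemma qbound:
  fixes J :: "real^'n^'m" and H :: "real^'n^'n"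
  assumes sys: "H *v d + transpose J *v y = - g" and Jd: "J *v d = - cc"
    and s: "s > 0" and sing: "\<forall>v. s * norm v \<le> norm (transpose J *v v)"
    and Hb: "\<forall>h. norm (H *v h) \<le> kap * norm h" and kap: "kap \<ge> 0"
    and curv: "\<forall>u. J *v u = 0 \<longrightarrow> zeta * (norm u)\<^sup>2 \<le> u \<bullet> (H *v u)" and zeta: "zeta > 0"
    and gG: "norm g \<le> G" and cC: "norm cc \<le> C"
  shows "g \<bullet> d + max (d \<bullet> (H *v d)) 0
     \<le> ((G + kap * ((G + kap * (C / s)) / zeta + C / s)) / s + (kap\<^sup>2 / zeta + kap) * C / s\<^sup>2) * l1n cc"
proof -
  obtain w u where de: "d = transpose J *v w + u" and Ju: "J *v u = 0" by (rule decomp)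
  define v where "v = transpose J *v w"
  have de': "d = v + u" using de v_def by simp
  have Jv: "J *v v = - cc" using Jd Ju de' by (simp add: matrix_vector_right_distrib)
  have nc0: "norm cc \<ge> 0" by simp
  have C0: "C \<ge> 0" using cC norm_ge_zero[of cc] by linarith
  have G0: "G \<ge> 0" using gG norm_ge_zero[of g] by linarith
  have vv: "v \<bullet> v = - (w \<bullet> cc)" using tr_dot[of J w v] Jv v_def by simp
  have "s * norm w \<le> norm v" using sing v_def by simp
  have nv1: "(norm v)\<^sup>2 \<le> norm w * norm cc"
    using vv Cauchy_Schwarz_ineq2[of w cc] by (simp add: power2_norm_eq_inner)
  have nvs: "s * norm v \<le> norm cc"
  proof (cases "v = 0")
    case True then show ?thesis by simp
  next
    case False
    then have "norm v > 0" by simp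
    have "s * (norm v)\<^sup>2 \<le> s * norm w * norm cc" using nv1 s by (simp add: mult.assoc)
    also have "\<dots> \<le> norm v * norm cc" using \<open>s * norm w \<le> norm v\<close> by (simp add: mult_right_mono)
    finally have "(s * norm v) * norm v \<le> norm cc * norm v" by (simp add: power2_eq_square algebra_simps)
    then show ?thesis using \<open>norm v > 0\<close> by simp
  qed
  have nvV: "norm v \<le> C / s" using nvs cC s by (simp add: field_simps)
  have nv2: "(norm v)\<^sup>2 \<le> C * norm cc / s\<^sup>2"
  proof -
    have "(s * norm v)\<^sup>2 \<le> (norm cc)\<^sup>2" using nvs s by (simp add: power_mono)
    also have "\<dots> \<le> C * norm cc" using cC by (simp add: power2_eq_square mult_right_mono)
    finally show ?thesis using s by (simp add: field_simps power_mult_distrib)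
  qed
  have uJy: "u \<bullet> (transpose J *v y) = 0" using tr_dot[of J y u] Ju by (simp add: inner_commute)
  have uHd: "u \<bullet> (H *v d) = - (u \<bullet> g)"
  proof -
    have "u \<bullet> (H *v d + transpose J *v y) = - (u \<bullet> g)" using sys by simp
    then show ?thesis using uJy by (simp add: inner_add_right)
  qed
  have Hd: "H *v d = H *v u + H *v v" using de' by (simp add: matrix_vector_right_distrib add.commute)
  have uHu: "u \<bullet> (H *v u) = - (u \<bullet> g) - u \<bullet> (H *v v)" using uHd Hd by (simp add: inner_add_right)
  have "\<bar>u \<bullet> (H *v v)\<bar> \<le> norm u * (kap * norm v)"
    using Cauchy_Schwarz_ineq2[of u "H *v v"] Hb by (meson mult_left_mono norm_ge_zero order_trans)
  moreover have "\<bar>u \<bullet> g\<bar> \<le> norm u * G" using Cauchy_Schwarz_ineq2[of u g] gG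
    by (meson mult_left_mono norm_ge_zero order_trans)
  ultimately have "zeta * (norm u)\<^sup>2 \<le> norm u * (G + kap * norm v)"
    using curv Ju uHu by (smt (verit, ccfv_SIG) distrib_left)
  then have nuz: "zeta * norm u \<le> G + kap * norm v"
    by (cases "u = 0") (auto simp: power2_eq_square G0 kap)
  have nuU: "norm u \<le> (G + kap * (C / s)) / zeta"
  proof -
    have "zeta * norm u \<le> G + kap * (C / s)" using nuz nvV kap by (smt (verit) mult_left_mono)
    then show ?thesis using zeta by (simp add: field_simps)
  qed
  have ndD: "norm d \<le> (G + kap * (C / s)) / zeta + C / s"
  proof -
    have "norm d \<le> norm v + norm u" using de' norm_triangle_ineq[of v u] by simp
    then show ?thesis using nuU nvV by linarith
  qed
  have "transpose J *v y = - g - H *v d" using sys by (simp add: algebra_simps)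
  then have "norm (transpose J *v y) \<le> G + kap * norm d"
    using norm_triangle_ineq4[of "-g" "H *v d"] gG Hb by simp (smt (verit) norm_minus_cancel norm_triangle_ineq4)
  also have "\<dots> \<le> G + kap * ((G + kap * (C / s)) / zeta + C / s)" using ndD kap by (simp add: mult_left_mono)
  finally have "s * norm y \<le> G + kap * ((G + kap * (C / s)) / zeta + C / s)" using sing by (meson order_trans)
  then have nyY: "norm y \<le> (G + kap * ((G + kap * (C / s)) / zeta + C / s)) / s"
    using s by (simp add: field_simps)
  have dHd: "d \<bullet> (H *v d) = - (g \<bullet> d) + y \<bullet> cc"
  proof -
    have "d \<bullet> (H *v d + transpose J *v y) = - (d \<bullet> g)" using sys by simp
    moreover have "d \<bullet> (transpose J *v y) = - (y \<bullet> cc)" using tr_dot[of J y d] Jd by (simp add: inner_commute)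
    ultimately show ?thesis by (simp add: inner_add_right inner_commute)
  qed
  have "d \<bullet> (H *v d) = u \<bullet> (H *v u) + u \<bullet> (H *v v) + v \<bullet> (H *v u) + v \<bullet> (H *v v)"
    using de' Hd by (simp add: inner_add_left inner_add_right)
  moreover have "\<bar>v \<bullet> (H *v u)\<bar> \<le> norm v * (kap * norm u)"
    using Cauchy_Schwarz_ineq2[of v "H *v u"] Hb by (meson mult_left_mono norm_ge_zero order_trans)
  moreover have "\<bar>v \<bullet> (H *v v)\<bar> \<le> norm v * (kap * norm v)"
    using Cauchy_Schwarz_ineq2[of v "H *v v"] Hb by (meson mult_left_mono norm_ge_zero order_trans)
  moreover have "\<bar>u \<bullet> (H *v v)\<bar> \<le> norm u * (kap * norm v)"
    using Cauchy_Schwarz_ineq2[of u "H *v v"] Hb by (meson mult_left_mono norm_ge_zero order_trans)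
  moreover have "zeta * (norm u)\<^sup>2 \<le> u \<bullet> (H *v u)" using curv Ju by simp
  moreover have "2 * kap * norm u * norm v - zeta * (norm u)\<^sup>2 \<le> kap\<^sup>2 / zeta * (norm v)\<^sup>2"
  proof -
    have "0 \<le> (zeta * norm u - kap * norm v)\<^sup>2" by simp
    then have "2 * kap * norm u * norm v * zeta - zeta * (norm u)\<^sup>2 * zeta \<le> kap\<^sup>2 * (norm v)\<^sup>2"
      by (simp add: power2_eq_square algebra_simps)
    then show ?thesis using zeta by (simp add: field_simps power2_eq_square)
  qed
  ultimately have negb: "- (d \<bullet> (H *v d)) \<le> (kap\<^sup>2 / zeta + kap) * (norm v)\<^sup>2"
    by (simp add: algebra_simps power2_eq_square)
  have K20: "kap\<^sup>2 / zeta + kap \<ge> 0" using kap zeta by simp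
  have mx: "max (- (d \<bullet> (H *v d))) 0 \<le> (kap\<^sup>2 / zeta + kap) * C / s\<^sup>2 * norm cc"
  proof -
    have "(kap\<^sup>2 / zeta + kap) * (norm v)\<^sup>2 \<le> (kap\<^sup>2 / zeta + kap) * (C * norm cc / s\<^sup>2)"
      using nv2 K20 by (rule mult_left_mono)
    moreover have "0 \<le> (kap\<^sup>2 / zeta + kap) * C / s\<^sup>2 * norm cc" using K20 C0 by simp
    ultimately show ?thesis using negb by (simp add: field_simps)
  qed
  have yc: "y \<bullet> cc \<le> (G + kap * ((G + kap * (C / s)) / zeta + C / s)) / s * norm cc"
    using Cauchy_Schwarz_ineq2[of y cc] nyY by (smt (verit) mult_right_mono norm_ge_zero)
  have "g \<bullet> d + max (d \<bullet> (H *v d)) 0 = y \<bullet> cc + max (- (d \<bullet> (H *v d))) 0"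
    using dHd by (simp add: max_def inner_commute)
  also have "\<dots> \<le> ((G + kap * ((G + kap * (C / s)) / zeta + C / s)) / s + (kap\<^sup>2 / zeta + kap) * C / s\<^sup>2) * norm cc"
    using yc mx by (simp only: distrib_right)
  also have "\<dots> \<le> ((G + kap * ((G + kap * (C / s)) / zeta + C / s)) / s + (kap\<^sup>2 / zeta + kap) * C / s\<^sup>2) * l1n cc"
  proof (rule mult_left_mono)
    show "norm cc \<le> l1n cc" unfolding l1n_def by (rule norm_le_l1_cart)
    show "0 \<le> (G + kap * ((G + kap * (C / s)) / zeta + C / s)) / s + (kap\<^sup>2 / zeta + kap) * C / s\<^sup>2"
      using G0 C0 kap zeta s K20 by simp
  qed
  finally show ?thesis .
qed
lemma ev_const:
  fixes t :: "nat \<Rightarrow> real"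
  assumes dec: "\<forall>k. t (Suc k) \<le> t k" and lb: "\<forall>k. m \<le> t k" and m: "m > 0"
    and ch: "\<forall>k. t (Suc k) \<noteq> t k \<longrightarrow> t (Suc k) \<le> r * t k" and r: "0 \<le> r" "r < 1"
  shows "\<exists>K. \<forall>k\<ge>K. t k = t K"
proof -
  define L where "L = Inf (range t)"
  have bdd: "bdd_below (range t)" using lb by (auto intro: bdd_belowI)
  have Lm: "m \<le> L" unfolding L_def using lb by (auto intro: cInf_greatest)
  have tL: "\<And>k. L \<le> t k" unfolding L_def using bdd by (auto intro: cInf_lower)
  have "\<exists>K. r * t K < L"
  proof (cases "r = 0")
    case True then show ?thesis using Lm m by auto
  next
    case False
    then have "r > 0" using r by simp
    have "L < L / r" using \<open>r > 0\<close> r Lm m by (simp add: field_simps)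
    then obtain K where "t K < L / r" unfolding L_def using bdd by (auto simp: cInf_less_iff)
    then have "r * t K < L" using \<open>r > 0\<close> by (simp add: field_simps)
    then show ?thesis by blast
  qed
  then obtain K where K: "r * t K < L" by blast
  have mono: "t k \<le> t K" if "k \<ge> K" for k
    using that
  proof (induction k rule: dec_induct)
    case base then show ?case by simp
  next
    case (step k) then show ?case using dec by (meson order_trans)
  qed
  have st: "t (Suc k) = t k" if "k \<ge> K" for k
  proof (rule ccontr)
    assume "t (Suc k) \<noteq> t k"
    then have "t (Suc k) \<le> r * t k" using ch by blast
    also have "\<dots> \<le> r * t K" using mono[OF that] r by (simp add: mult_left_mono)
    finally show False using K tL[of "Suc k"] by linarith
  qed
  have "t k = t K" if "k \<ge> K" for k
    using that
  proof (induction k rule: dec_induct)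
    case base then show ?case by simp
  next
    case (step k) then show ?case using st by simp
  qed
  then show ?thesis by blast
qed

lemma tau_upd_props:
  assumes q: "g \<bullet> d + max (d \<bullet> (H *v d)) 0 \<le> K1 * cn" and K1: "K1 > 0" and cn: "cn \<ge> 0"
    and tp: "m \<le> tp" and mle: "m \<le> (1 - eps) * (1 - sig) / K1" and m: "m > 0"
    and e: "0 < eps" "eps < 1" and sg: "0 < sig" "sig < 1"
  shows "tau_update eps sig tp g H d cn \<le> tp"
    and "m \<le> tau_update eps sig tp g H d cn"
    and "tau_update eps sig tp g H d cn \<noteq> tp \<longrightarrow> tau_update eps sig tp g H d cn \<le> (1 - eps) * tp"
proof -
  define qq where "qq = g \<bullet> d + max (d \<bullet> (H *v d)) 0"
  define tt where "tt = (1 - sig) * cn / qq"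
  have def: "tau_update eps sig tp g H d cn = (if qq \<le> 0 then tp else if tp \<le> tt then tp else (1 - eps) * tt)"
    unfolding tau_update_def qq_def tt_def Let_def by simp
  have all: "tau_update eps sig tp g H d cn \<le> tp \<and> m \<le> tau_update eps sig tp g H d cn
     \<and> (tau_update eps sig tp g H d cn \<noteq> tp \<longrightarrow> tau_update eps sig tp g H d cn \<le> (1 - eps) * tp)"
  proof (cases "qq \<le> 0 \<or> tp \<le> tt")
    case True then show ?thesis using def tp by auto
  next
    case False
    then have qp: "qq > 0" and lt: "tt < tp" by auto
    have "qq \<le> K1 * cn" using q qq_def by simp
    have "(1 - sig) / K1 \<le> tt"
    proof -
      have "(1 - sig) * qq \<le> (1 - sig) * (K1 * cn)" using \<open>qq \<le> K1 * cn\<close> sg by simp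
      then show ?thesis unfolding tt_def using qp K1 by (simp add: field_simps)
    qed
    then have "(1 - eps) * ((1 - sig) / K1) \<le> (1 - eps) * tt" using e by (metis diff_gt_0_iff_gt less_eq_real_def mult_left_mono times_divide_eq_right)
    then have "m \<le> (1 - eps) * tt" using mle by simp
    moreover have "(1 - eps) * tt \<le> (1 - eps) * tp" using lt e by simp
    moreover have "(1 - eps) * tp \<le> tp" using e tp m by simp
    ultimately show ?thesis using def False by auto
  qed
  then show "tau_update eps sig tp g H d cn \<le> tp"
    and "m \<le> tau_update eps sig tp g H d cn"
    and "tau_update eps sig tp g H d cn \<noteq> tp \<longrightarrow> tau_update eps sig tp g H d cn \<le> (1 - eps) * tp"
    by auto
qed
theorem lemma2p16:
  fixes f :: "real^'n \<Rightarrow> real" and gradf :: "real^'n \<Rightarrow> real^'n"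
    and c :: "real^'n \<Rightarrow> real^'m" and Jc :: "real^'n \<Rightarrow> real^'n^'m"
    and X :: "(real^'n) set"
    and H :: "nat \<Rightarrow> real^'n^'n"
    and x d :: "nat \<Rightarrow> real^'n" and y :: "nat \<Rightarrow> real^'m"
    and tau alpha :: "nat \<Rightarrow> real"
    and eps sig eta tau0 :: real
    and rho Lm1 :: real and Gm1 :: "'m \<Rightarrow> real"
    and LL :: "nat \<Rightarrow> nat \<Rightarrow> real" and GG :: "nat \<Rightarrow> nat \<Rightarrow> 'm \<Rightarrow> real" and jacc :: "nat \<Rightarrow> nat"
    and nu abar :: real
    and kappaH zeta :: real
  assumes params: "0 < eps" "eps < 1" "0 < sig" "sig < 1" "0 < eta" "eta < 1" "0 < tau0"
    and X_open: "open X" and X_convex: "convex X"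
    and iter_in_X: "\<forall>k. x k \<in> X"
    and f_deriv: "\<forall>z\<in>X. (f has_derivative (\<lambda>h. gradf z \<bullet> h)) (at z)"
    and gradf_cont: "continuous_on X gradf"
    and f_bdd_below: "\<exists>B. \<forall>z\<in>X. B \<le> f z"
    and gradf_bdd: "\<exists>B. \<forall>z\<in>X. norm (gradf z) \<le> B"
    and gradf_lip: "\<exists>Lf. \<forall>z\<in>X. \<forall>w\<in>X. norm (gradf z - gradf w) \<le> Lf * dist z w"
    and c_deriv: "\<forall>z\<in>X. (c has_derivative (\<lambda>h. Jc z *v h)) (at z)"
    and c_bdd: "\<exists>B. \<forall>z\<in>X. norm (c z) \<le> B"
    and Jc_bdd: "\<exists>B. \<forall>z\<in>X. onorm (\<lambda>h. Jc z *v h) \<le> B"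
    and Jc_lip: "\<forall>i. \<exists>gi. \<forall>z\<in>X. \<forall>w\<in>X. norm (Jc z $ i - Jc w $ i) \<le> gi * dist z w"
    and Jc_sing: "\<exists>s>0. \<forall>z\<in>X. \<forall>v::real^'m. s * norm v \<le> norm (transpose (Jc z) *v v)"
    and H_sym: "\<forall>k. transpose (H k) = H k"
    and H_bdd: "\<forall>k. onorm (\<lambda>h. H k *v h) \<le> kappaH"
    and zeta_pos: "0 < zeta"
    and H_curv: "\<forall>k. \<forall>u. Jc (x k) *v u = 0 \<longrightarrow> zeta * (norm u)\<^sup>2 \<le> u \<bullet> (H k *v u)"
    and iter: "common_iter f gradf c Jc H eps sig tau0 x d y tau alpha"
    and no_term: "\<forall>k. \<not> (gradf (x k) + transpose (Jc (x k)) *v y k = 0 \<and> c (x k) = 0)"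
    and steps: "(1 < rho \<and> 0 < Lm1 \<and> (\<forall>i. 0 < Gm1 i)
                  \<and> alg1_steps f gradf c Jc H eta rho Lm1 Gm1 X x d tau alpha LL GG jacc)
              \<or> (0 < nu \<and> nu < 1 \<and> 0 < abar
                  \<and> alg2_steps f gradf c H eta nu abar X x d tau alpha)"
  shows "\<exists>k_tau tau_min. tau_min > 0 \<and> (\<forall>k\<ge>k_tau. tau k = tau_min)"
proof -
  obtain s where s: "s > 0" and sing: "\<forall>z\<in>X. \<forall>v::real^'m. s * norm v \<le> norm (transpose (Jc z) *v v)"
    using Jc_sing by blast
  obtain G where G: "\<forall>z\<in>X. norm (gradf z) \<le> G" using gradf_bdd by blast
  obtain C where C: "\<forall>z\<in>X. norm (c z) \<le> C" using c_bdd by blast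
  have kap: "kappaH \<ge> 0"
    using H_bdd[rule_format, of 0] onorm_pos_le[OF matrix_vector_mul_bounded_linear[of "H 0"]] by simp
  have Hb: "\<forall>h. norm (H k *v h) \<le> kappaH * norm h" for k
  proof
    fix h
    have "norm (H k *v h) \<le> onorm (\<lambda>h. H k *v h) * norm h"
      using onorm[OF matrix_vector_mul_bounded_linear[of "H k"]] by simp
    also have "\<dots> \<le> kappaH * norm h" using H_bdd by (simp add: mult_right_mono)
    finally show "norm (H k *v h) \<le> kappaH * norm h" .
  qed
  define Kc where "Kc = ((G + kappaH * ((G + kappaH * (C / s)) / zeta + C / s)) / s + (kappaH\<^sup>2 / zeta + kappaH) * C / s\<^sup>2)"
  define K1 where "K1 = \<bar>Kc\<bar> + 1"
  have K1: "K1 > 0" unfolding K1_def by simp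
  have l1nn: "l1n v \<ge> 0" for v :: "real^'m" unfolding l1n_def by (simp add: sum_nonneg)
  have qb: "gradf (x k) \<bullet> d k + max (d k \<bullet> (H k *v d k)) 0 \<le> K1 * l1n (c (x k))" for k
  proof -
    have it: "H k *v d k + transpose (Jc (x k)) *v y k = - gradf (x k)" "Jc (x k) *v d k = - c (x k)"
      using iter unfolding common_iter_def by auto
    have "gradf (x k) \<bullet> d k + max (d k \<bullet> (H k *v d k)) 0 \<le> Kc * l1n (c (x k))"
      unfolding Kc_def
      apply (rule qbound[OF it(1) it(2) s])
      using sing iter_in_X Hb kap H_curv zeta_pos G C by auto
    also have "\<dots> \<le> K1 * l1n (c (x k))" unfolding K1_def using l1nn[of "c (x k)"]
      by (intro mult_right_mono) auto
    finally show ?thesis .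
  qed
  define m where "m = min tau0 ((1 - eps) * (1 - sig) / K1)"
  have m: "m > 0" unfolding m_def using params K1 by simp
  have mle: "m \<le> (1 - eps) * (1 - sig) / K1" unfolding m_def by simp
  define t where "t = (\<lambda>k. if k = 0 then tau0 else tau (k - 1))"
  have tS: "t (Suc k) = tau k" for k unfolding t_def by simp
  have tau_eq: "tau k = tau_update eps sig (t k) (gradf (x k)) (H k) (d k) (l1n (c (x k)))" for k
    using iter unfolding common_iter_def t_def by auto
  have lb: "m \<le> t k" for k
  proof (induction k)
    case 0 then show ?case unfolding t_def m_def by simp
  next
    case (Suc k)
    show ?case unfolding tS tau_eq
      by (rule tau_upd_props(2)[OF qb K1 l1nn Suc mle m params(1,2,3,4)])
  qed
  have dec: "\<forall>k. t (Suc k) \<le> t k"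
    using tau_upd_props(1)[OF qb K1 l1nn lb mle m params(1,2,3,4)] tS tau_eq by metis
  have ch: "\<forall>k. t (Suc k) \<noteq> t k \<longrightarrow> t (Suc k) \<le> (1 - eps) * t k"
    using tau_upd_props(3)[OF qb K1 l1nn lb mle m params(1,2,3,4)] tS tau_eq by metis
  obtain K where K: "\<forall>k\<ge>K. t k = t K"
    using ev_const[OF dec _ m ch] lb params(1,2) by force
  show ?thesis
  proof (intro exI conjI allI impI)
    show "t (Suc K) > 0" using lb[of "Suc K"] m by linarith
    fix k assume "K \<le> k"
    then have "t (Suc k) = t K" "t (Suc K) = t K" using K[rule_format, of "Suc k"] K[rule_format, of "Suc K"] by simp_all
    then show "tau k = t (Suc K)" using tS[of k] by simp
  qed
qed

end
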